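(* Let $\mathcal G=(\mathcal V,\mathcal E,W)$ be a network with $n=|\mathcal V|$ nodes and out-degree vector $w$, let $h^-\le h^+$ in $\mathbb R^{\mathcal V}$ and $\mathcal H=\prod_i[h_i^-,h_i^+]$, and assume $\mathcal G$ is $\mathcal H$-robustly indecomposable. Then: (i) for every configuration $x\in\mathcal X$ there exists an $\mathcal H$-robust I-path of length at most $n$ from $x$ to some configuration in $\{\pm\mathbf 1\}$; in particular $\{\pm\mathbf 1\}$ is globally I-reachable for the coordination game with every external field $h\in\mathcal H$; (ii) if $w\ge h^+$ and $w\ge -h^-$ (i.e., the game is $\mathcal H$-robustly regular), then for every $h\in\mathcal H$ the set of equilibria is $\mathcal X^*_h=\{\pm\mathbf 1\}$ and it is globally I-stable; (iii) if for some $a\in\{\pm1\}$ one has $w\ge -a\,h^{-a}$ and $w\ngeq a\,h^{-a}$, then from every configuration $x\in\mathcal X$ there exists an $\mathcal H$-robust I-path to $a\mathbf 1$, and for every $h\in\mathcal H$ the set of equilibria is $\mathcal X^*_h=\{a\mathbf 1\}$ and it is globally BR-stable.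
   Context: A network is $\mathcal G=(\mathcal V,\mathcal E,W)$ with finite node set $\mathcal V$, links $\mathcal E\subseteq\mathcal V\times\mathcal V$, weight matrix $W\in\mathbb R_+^{\mathcal V\times\mathcal V}$ with zero diagonal, $W_{ij}>0$ iff $(i,j)\in\mathcal E$; for $\mathcal S\subseteq\mathcal V$, $w_i^{\mathcal S}=\sum_{j\in\mathcal S}W_{ij}$; $w=W\mathbf 1$. $\mathcal X=\{-1,+1\}^{\mathcal V}$. Componentwise order; $x\ngeq y$ means $x_i<y_i$ for some $i$. For $a=+1$ (resp. $-1$), $h^{-a}$ denotes $h^-$ (resp. $h^+$). $h$-indecomposable: for every partition $\mathcal V=\mathcal V^+\cup\mathcal V^-$ into two disjoint nonempty sets there exist $s\in\{-,+\}$ and $i\in\mathcal V^s$ with $w_i^{\mathcal V^s}+s\,h_i<w_i^{\mathcal V^{-s}}$ ($s\,h_i$ is $\pm h_i$ according to $s$, $-s$ is the opposite sign). $\mathcal G$ is $\mathcal H$-robustly indecomposable if it is $h$-indecomposable for every $h\in\mathcal H$. Coordination game with external field $h$: players $\mathcal V$, actions $\{\pm1\}$, utilities $u_i(x)=x_i(\sum_jW_{ij}x_j+h_i)$; equilibria $x^*$ with $x_i^*$ maximizing $u_i(\cdot,x^*_{-i})$, set $\mathcal X^*_h$. An admissible path of length $l\ge0$ is a sequence $x^{(0)},\dots,x^{(l)}$ with consecutive configurations differing exactly in the action of one player $i_k$; for a given $h$ it is an I-path if $u_{i_k}(x^{(k)})>u_{i_k}(x^{(k-1)})$ for all $k$,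 a BR-path if $\ge$ holds instead. An $\mathcal H$-robust I-path is an admissible path that is an I-path for the game with external field $h$ for every $h\in\mathcal H$. For $\alpha\in\{\mathrm I,\mathrm{BR}\}$, $\mathcal Y\subseteq\mathcal X$ is globally $\alpha$-reachable if from every $x$ there is an $\alpha$-path to some element of $\mathcal Y$, and globally $\alpha$-stable if in addition there is no $\alpha$-path from any $y\in\mathcal Y$ to any $z\notin\mathcal Y$. *)

theory Defs
  imports Complex_Main
begin

text \<open>Nodes are the elements of a finite type 'v (so V = UNIV). A network is given
by its weight matrix W (links are the pairs with W i j > 0).\<close>

definition network :: "('v::finite \<Rightarrow> 'v \<Rightarrow> real) \<Rightarrow> bool" where
  "network W \<longleftrightarrow> (\<forall>i j. W i j \<ge> 0) \<and> (\<forall>i. W i i = 0)"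

definition wS :: "('v \<Rightarrow> 'v \<Rightarrow> real) \<Rightarrow> 'v set \<Rightarrow> 'v \<Rightarrow> real" where
  "wS W S i = (\<Sum>j\<in>S. W i j)"

definition outdeg :: "('v::finite \<Rightarrow> 'v \<Rightarrow> real) \<Rightarrow> 'v \<Rightarrow> real" where
  "outdeg W i = (\<Sum>j\<in>UNIV. W i j)"

definition configs :: "('v \<Rightarrow> real) set" where
  "configs = {x. \<forall>i. x i = 1 \<or> x i = -1}"

definition h_indecomposable :: "('v::finite \<Rightarrow> 'v \<Rightarrow> real) \<Rightarrow> ('v \<Rightarrow> real) \<Rightarrow> bool" where
  "h_indecomposable W h \<longleftrightarrow>
     (\<forall>Vp Vm. Vp \<inter> Vm = {} \<and> Vp \<union> Vm = UNIV \<and> Vp \<noteq> {} \<and> Vm \<noteq> {} \<longrightarrow>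
        (\<exists>i\<in>Vp. wS W Vp i + h i < wS W Vm i) \<or> (\<exists>i\<in>Vm. wS W Vm i - h i < wS W Vp i))"

definition robustly_indecomposable ::
  "('v::finite \<Rightarrow> 'v \<Rightarrow> real) \<Rightarrow> ('v \<Rightarrow> real) set \<Rightarrow> bool" where
  "robustly_indecomposable W H \<longleftrightarrow> (\<forall>h\<in>H. h_indecomposable W h)"

definition box :: "('v \<Rightarrow> real) \<Rightarrow> ('v \<Rightarrow> real) \<Rightarrow> ('v \<Rightarrow> real) set" where
  "box hm hp = {h. \<forall>i. hm i \<le> h i \<and> h i \<le> hp i}"

definition utility :: "('v::finite \<Rightarrow> 'v \<Rightarrow> real) \<Rightarrow> ('v \<Rightarrow> real) \<Rightarrow> ('v \<Rightarrow> real) \<Rightarrow> 'v \<Rightarrow> real" where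
  "utility W h x i = x i * ((\<Sum>j\<in>UNIV. W i j * x j) + h i)"

definition equilibria :: "('v::finite \<Rightarrow> 'v \<Rightarrow> real) \<Rightarrow> ('v \<Rightarrow> real) \<Rightarrow> ('v \<Rightarrow> real) set" where
  "equilibria W h = {x \<in> configs. \<forall>i. \<forall>a\<in>{-1, 1}. utility W h (x(i := a)) i \<le> utility W h x i}"

text \<open>A path x^(0),...,x^(l) is a nonempty list of configurations; its length is
  length xs - 1. Step k goes from xs!k to xs!(k+1) and flips exactly player i.\<close>

definition step_player :: "('v \<Rightarrow> real) \<Rightarrow> ('v \<Rightarrow> real) \<Rightarrow> 'v \<Rightarrow> bool" where
  "step_player x y i \<longleftrightarrow> x i \<noteq> y i \<and> (\<forall>j. j \<noteq> i \<longrightarrow> x j = y j)"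

definition admissible_path :: "('v \<Rightarrow> real) list \<Rightarrow> bool" where
  "admissible_path xs \<longleftrightarrow> xs \<noteq> [] \<and> set xs \<subseteq> configs \<and>
     (\<forall>k. Suc k < length xs \<longrightarrow> (\<exists>i. step_player (xs!k) (xs!Suc k) i))"

definition I_path :: "('v::finite \<Rightarrow> 'v \<Rightarrow> real) \<Rightarrow> ('v \<Rightarrow> real) \<Rightarrow> ('v \<Rightarrow> real) list \<Rightarrow> bool" where
  "I_path W h xs \<longleftrightarrow> admissible_path xs \<and>
     (\<forall>k i. Suc k < length xs \<longrightarrow> step_player (xs!k) (xs!Suc k) i \<longrightarrow>
        utility W h (xs!Suc k) i > utility W h (xs!k) i)"

definition BR_path :: "('v::finite \<Rightarrow> 'v \<Rightarrow> real) \<Rightarrow> ('v \<Rightarrow> real) \<Rightarrow> ('v \<Rightarrow> real) list \<Rightarrow> bool" where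
  "BR_path W h xs \<longleftrightarrow> admissible_path xs \<and>
     (\<forall>k i. Suc k < length xs \<longrightarrow> step_player (xs!k) (xs!Suc k) i \<longrightarrow>
        utility W h (xs!Suc k) i \<ge> utility W h (xs!k) i)"

definition robust_I_path ::
  "('v::finite \<Rightarrow> 'v \<Rightarrow> real) \<Rightarrow> ('v \<Rightarrow> real) set \<Rightarrow> ('v \<Rightarrow> real) list \<Rightarrow> bool" where
  "robust_I_path W H xs \<longleftrightarrow> admissible_path xs \<and> (\<forall>h\<in>H. I_path W h xs)"

definition globally_reachable :: "(('v \<Rightarrow> real) list \<Rightarrow> bool) \<Rightarrow> ('v \<Rightarrow> real) set \<Rightarrow> bool" where
  "globally_reachable P Y \<longleftrightarrow> (\<forall>x\<in>configs. \<exists>xs. P xs \<and> hd xs = x \<and> last xs \<in> Y)"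

definition globally_stable :: "(('v \<Rightarrow> real) list \<Rightarrow> bool) \<Rightarrow> ('v \<Rightarrow> real) set \<Rightarrow> bool" where
  "globally_stable P Y \<longleftrightarrow> globally_reachable P Y \<and>
     \<not> (\<exists>xs. P xs \<and> hd xs \<in> Y \<and> last xs \<notin> Y)"

text \<open>h^{-a}: h^- for a = 1, h^+ for a = -1.\<close>
definition hneg :: "real \<Rightarrow> ('v \<Rightarrow> real) \<Rightarrow> ('v \<Rightarrow> real) \<Rightarrow> ('v \<Rightarrow> real)" where
  "hneg a hm hp = (if a = 1 then hm else hp)"

end

theory Submission imports Defs begin

definition cfg :: "'v set \<Rightarrow> 'v \<Rightarrow> real" where
  "cfg P = (\<lambda>j. if j \<in> P then 1 else -1)"

definition sc :: "('v::finite \<Rightarrow> 'v \<Rightarrow> real) \<Rightarrow> 'v set \<Rightarrow> 'v \<Rightarrow> real" where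
  "sc W P i = (\<Sum>j\<in>UNIV. W i j * cfg P j)"

definition Fs :: "('v::finite \<Rightarrow> 'v \<Rightarrow> real) \<Rightarrow> ('v \<Rightarrow> real) \<Rightarrow> 'v set \<Rightarrow> 'v set" where
  "Fs W hp P = {i. sc W P i + hp i \<ge> 0}"

definition Gs :: "('v::finite \<Rightarrow> 'v \<Rightarrow> real) \<Rightarrow> ('v \<Rightarrow> real) \<Rightarrow> 'v set \<Rightarrow> 'v set" where
  "Gs W hm P = {i. sc W P i + hm i > 0}"

lemma cfg_configs: "cfg P \<in> configs"
  by (auto simp: cfg_def configs_def)

lemma configs_cfg: "x \<in> configs \<Longrightarrow> x = cfg {j. x j = 1}"
  by (rule ext) (auto simp: cfg_def configs_def)

lemma cfg_UNIV: "cfg UNIV = (\<lambda>_. 1)" and cfg_empty: "cfg {} = (\<lambda>_. -1)"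
  by (auto simp: cfg_def)

lemma sc_wS: "sc W P i = wS W P i - wS W (-P) i"
proof -
  have "sc W P i = (\<Sum>j\<in>P \<union> -P. W i j * cfg P j)" by (simp add: sc_def)
  also have "\<dots> = (\<Sum>j\<in>P. W i j * cfg P j) + (\<Sum>j\<in>-P. W i j * cfg P j)"
    by (rule sum.union_disjoint) auto
  also have "(\<Sum>j\<in>P. W i j * cfg P j) = wS W P i"
    by (auto simp: wS_def cfg_def intro!: sum.cong)
  also have "(\<Sum>j\<in>-P. W i j * cfg P j) = (\<Sum>j\<in>-P. - W i j)"
    by (auto simp: cfg_def intro!: sum.cong)
  also have "\<dots> = - wS W (-P) i" by (simp add: wS_def sum_negf)
  finally show ?thesis by simp
qed

lemma sc_UNIV: "sc W UNIV i = outdeg W i" and sc_empty: "sc W {} i = - outdeg W i"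
  by (simp_all add: sc_wS wS_def outdeg_def)

lemma util_upd:
  assumes "network W"
  shows "utility W h (x(i:=a)) i = a * ((\<Sum>j\<in>UNIV. W i j * x j) + h i)"
proof -
  have "(\<Sum>j\<in>UNIV. W i j * (x(i:=a)) j) = (\<Sum>j\<in>UNIV. W i j * x j)"
    using assms by (intro sum.cong) (auto simp: network_def)
  then show ?thesis by (simp add: utility_def)
qed

lemma util_cfg: "utility W h (cfg P) i = cfg P i * (sc W P i + h i)"
  by (simp add: utility_def sc_def)

lemma sc_ins:
  assumes "network W"
  shows "sc W (insert i P) i = sc W P i" "sc W (P - {i}) i = sc W P i"
  using assms by (auto simp: sc_def cfg_def network_def intro!: sum.cong)

lemma sc_mono:
  assumes "network W" "P \<subseteq> Q"
  shows "sc W P i \<le> sc W Q i"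
  unfolding sc_def
proof (rule sum_mono)
  fix j
  have "cfg P j \<le> cfg Q j" using assms(2) by (auto simp: cfg_def)
  moreover have "W i j \<ge> 0" using assms(1) by (simp add: network_def)
  ultimately show "W i j * cfg P j \<le> W i j * cfg Q j" by (rule mult_left_mono)
qed

lemma Fs_mono: "network W \<Longrightarrow> P \<subseteq> Q \<Longrightarrow> Fs W hp P \<subseteq> Fs W hp Q"
proof
  fix i assume "network W" "P \<subseteq> Q" "i \<in> Fs W hp P"
  then have "sc W P i \<le> sc W Q i" "sc W P i + hp i \<ge> 0" by (auto simp: Fs_def intro: sc_mono)
  then show "i \<in> Fs W hp Q" by (simp add: Fs_def)
qed

lemma Gs_mono: "network W \<Longrightarrow> P \<subseteq> Q \<Longrightarrow> Gs W hm P \<subseteq> Gs W hm Q"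
proof
  fix i assume "network W" "P \<subseteq> Q" "i \<in> Gs W hm P"
  then have "sc W P i \<le> sc W Q i" "sc W P i + hm i > 0" by (auto simp: Gs_def intro: sc_mono)
  then show "i \<in> Gs W hm Q" by (simp add: Gs_def)
qed

lemma Gs_Fs: "\<forall>i. hm i \<le> hp i \<Longrightarrow> Gs W hm P \<subseteq> Fs W hp P"
proof
  fix i assume "\<forall>i. hm i \<le> hp i" "i \<in> Gs W hm P"
  then have "hm i \<le> hp i" "sc W P i + hm i > 0" by (auto simp: Gs_def)
  then show "i \<in> Fs W hp P" by (simp add: Fs_def)
qed

lemma stuck_exists:
  assumes net: "network W" and hle: "\<forall>i. hm i \<le> hp i"
    and A: "A \<subseteq> Fs W hp A" and C: "Gs W hm C \<subseteq> C" and AC: "A \<subseteq> C"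
  shows "\<exists>P. A \<subseteq> P \<and> P \<subseteq> C \<and> P \<subseteq> Fs W hp P \<and> Gs W hm P \<subseteq> P"
proof -
  define L where "L = {P. P \<subseteq> C \<and> P \<subseteq> Fs W hp P}"
  define Q where "Q = \<Union>L"
  have AL: "A \<in> L" using A AC by (simp add: L_def)
  have QC: "Q \<subseteq> C" by (auto simp: Q_def L_def)
  have QF: "Q \<subseteq> Fs W hp Q"
  proof
    fix i assume "i \<in> Q"
    then obtain P where P: "P \<in> L" "i \<in> P" by (auto simp: Q_def)
    have "P \<subseteq> Q" using P(1) by (auto simp: Q_def)
    then have "Fs W hp P \<subseteq> Fs W hp Q" by (rule Fs_mono[OF net])
    with P show "i \<in> Fs W hp Q" by (auto simp: L_def)
  qed
  define T where "T = Q \<union> Gs W hm Q"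
  have "Gs W hm Q \<subseteq> Gs W hm C" by (rule Gs_mono[OF net QC])
  then have TC: "T \<subseteq> C" using QC C by (auto simp: T_def)
  have "Fs W hp Q \<subseteq> Fs W hp T" by (rule Fs_mono[OF net]) (auto simp: T_def)
  moreover have "Gs W hm Q \<subseteq> Fs W hp Q" by (rule Gs_Fs[OF hle])
  ultimately have TF: "T \<subseteq> Fs W hp T" using QF by (auto simp: T_def)
  have "T \<in> L" using TC TF by (simp add: L_def)
  then have "T \<subseteq> Q" by (auto simp: Q_def)
  then have "Gs W hm Q \<subseteq> Q" by (auto simp: T_def)
  moreover have "A \<subseteq> Q" using AL by (auto simp: Q_def)
  ultimately show ?thesis using QC QF by blast
qed

lemma indec_stuck:
  assumes hle: "\<forall>i. hm i \<le> hp i"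
    and indec: "robustly_indecomposable W (box hm hp)"
    and F: "P \<subseteq> Fs W hp P" and G: "Gs W hm P \<subseteq> P"
  shows "P = {} \<or> P = UNIV"
proof (rule ccontr)
  assume ne: "\<not> (P = {} \<or> P = UNIV)"
  define h where "h = (\<lambda>i. if i \<in> P then hp i else hm i)"
  have "h \<in> box hm hp" using hle by (auto simp: h_def box_def)
  then have hi: "h_indecomposable W h" using indec by (simp add: robustly_indecomposable_def)
  have "P \<inter> -P = {} \<and> P \<union> -P = UNIV \<and> P \<noteq> {} \<and> -P \<noteq> {}" using ne by auto
  then have "(\<exists>i\<in>P. wS W P i + h i < wS W (-P) i) \<or> (\<exists>i\<in>-P. wS W (-P) i - h i < wS W P i)"
    using hi unfolding h_indecomposable_def by blast
  then show False
  proof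
    assume "\<exists>i\<in>P. wS W P i + h i < wS W (-P) i"
    then obtain i where "i \<in> P" "wS W P i + hp i < wS W (-P) i" by (auto simp: h_def)
    then have "i \<notin> Fs W hp P" by (simp add: Fs_def sc_wS)
    with F \<open>i \<in> P\<close> show False by auto
  next
    assume "\<exists>i\<in>-P. wS W (-P) i - h i < wS W P i"
    then obtain i where "i \<notin> P" "wS W (-P) i - hm i < wS W P i" by (auto simp: h_def)
    then have "i \<in> Gs W hm P" by (simp add: Gs_def sc_wS)
    with G \<open>i \<notin> P\<close> show False by auto
  qed
qed

definition rstep :: "('v::finite \<Rightarrow> 'v \<Rightarrow> real) \<Rightarrow> ('v \<Rightarrow> real) set \<Rightarrow> ('v \<Rightarrow> real) \<Rightarrow> ('v \<Rightarrow> real) \<Rightarrow> bool" where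
  "rstep W H x y \<longleftrightarrow> x \<in> configs \<and> y \<in> configs \<and> (\<exists>i. step_player x y i) \<and>
     (\<forall>h\<in>H. \<forall>i. step_player x y i \<longrightarrow> utility W h y i > utility W h x i)"

lemma cons_steps:
  assumes "Q x (hd ys)" "\<forall>k. Suc k < length ys \<longrightarrow> Q (ys!k) (ys!Suc k)" "ys \<noteq> []"
  shows "\<forall>k. Suc k < length (x#ys) \<longrightarrow> Q ((x#ys)!k) ((x#ys)!Suc k)"
proof (intro allI impI)
  fix k assume k: "Suc k < length (x#ys)"
  show "Q ((x#ys)!k) ((x#ys)!Suc k)"
  proof (cases k)
    case 0 then show ?thesis using assms(1,3) by (simp add: hd_conv_nth)
  next
    case (Suc m) then show ?thesis using assms(2) k by simp
  qed
qed

lemma rpath_single: "x \<in> configs \<Longrightarrow> robust_I_path W H [x]"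
  by (simp add: robust_I_path_def I_path_def admissible_path_def)

lemma rpath_cons:
  assumes st: "rstep W H x (hd ys)" and p: "robust_I_path W H ys"
  shows "robust_I_path W H (x # ys)"
proof -
  have ne: "ys \<noteq> []" and sub: "set ys \<subseteq> configs"
    and adm: "\<forall>k. Suc k < length ys \<longrightarrow> (\<exists>i. step_player (ys!k) (ys!Suc k) i)"
    using p by (auto simp: robust_I_path_def admissible_path_def)
  have adm2: "admissible_path (x#ys)"
    unfolding admissible_path_def
    using st sub cons_steps[where Q="\<lambda>a b. \<exists>i. step_player a b i", OF _ adm ne]
    by (auto simp: rstep_def)
  moreover have "I_path W h (x#ys)" if h: "h \<in> H" for h
  proof -
    have "\<forall>k. Suc k < length ys \<longrightarrow> (\<forall>i. step_player (ys!k) (ys!Suc k) i \<longrightarrow>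
        utility W h (ys!Suc k) i > utility W h (ys!k) i)"
      using p h by (auto simp: robust_I_path_def I_path_def)
    from cons_steps[where Q="\<lambda>a b. \<forall>i. step_player a b i \<longrightarrow> utility W h b i > utility W h a i", OF _ this ne]
    have "\<forall>k. Suc k < length (x#ys) \<longrightarrow> (\<forall>i. step_player ((x#ys)!k) ((x#ys)!Suc k) i \<longrightarrow>
        utility W h ((x#ys)!Suc k) i > utility W h ((x#ys)!k) i)"
      using st h by (auto simp: rstep_def)
    then show ?thesis using adm2 by (simp add: I_path_def)
  qed
  ultimately show ?thesis by (simp add: robust_I_path_def)
qed

lemma step_player_upd: "x i \<noteq> a \<Longrightarrow> step_player x (x(i:=a)) j \<longleftrightarrow> j = i"
  by (auto simp: step_player_def)

lemma down_step:
  assumes net: "network W" and i: "i \<in> S" and neg: "sc W S i + hp i < 0"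
  shows "rstep W (box hm hp) (cfg S) (cfg (S - {i}))"
proof -
  have eq: "cfg (S - {i}) = (cfg S)(i := -1)" by (auto simp: cfg_def)
  have ci: "cfg S i = 1" using i by (simp add: cfg_def)
  show ?thesis
    unfolding rstep_def eq
  proof (intro conjI ballI allI impI)
    show "cfg S \<in> configs" by (rule cfg_configs)
    show "(cfg S)(i := -1) \<in> configs" using cfg_configs[of "S - {i}"] eq by simp
    show "\<exists>j. step_player (cfg S) ((cfg S)(i := -1)) j"
      using step_player_upd[of "cfg S" i "-1"] ci by auto
    fix h j assume h: "h \<in> box hm hp" and sp: "step_player (cfg S) ((cfg S)(i := -1)) j"
    then have j: "j = i" using step_player_upd[of "cfg S" i "-1"] ci by auto
    have "h i \<le> hp i" using h by (simp add: box_def)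
    then have "sc W S i + h i < 0" using neg by simp
    then show "utility W h (cfg S) j < utility W h ((cfg S)(i := -1)) j"
      unfolding j util_upd[OF net] util_cfg ci by (simp add: sc_def)
  qed
qed

lemma up_step:
  assumes net: "network W" and i: "i \<notin> S" and pos: "sc W S i + hm i > 0"
  shows "rstep W (box hm hp) (cfg S) (cfg (insert i S))"
proof -
  have eq: "cfg (insert i S) = (cfg S)(i := 1)" by (auto simp: cfg_def)
  have ci: "cfg S i = -1" using i by (simp add: cfg_def)
  show ?thesis
    unfolding rstep_def eq
  proof (intro conjI ballI allI impI)
    show "cfg S \<in> configs" by (rule cfg_configs)
    show "(cfg S)(i := 1) \<in> configs" using cfg_configs[of "insert i S"] eq by simp
    show "\<exists>j. step_player (cfg S) ((cfg S)(i := 1)) j"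
      using step_player_upd[of "cfg S" i "1"] ci by auto
    fix h j assume h: "h \<in> box hm hp" and sp: "step_player (cfg S) ((cfg S)(i := 1)) j"
    then have j: "j = i" using step_player_upd[of "cfg S" i "1"] ci by auto
    have "hm i \<le> h i" using h by (simp add: box_def)
    then have "sc W S i + h i > 0" using pos by simp
    then show "utility W h (cfg S) j < utility W h ((cfg S)(i := 1)) j"
      unfolding j util_upd[OF net] util_cfg ci by (simp add: sc_def)
  qed
qed

lemma down_path:
  fixes W :: "'v::finite \<Rightarrow> 'v \<Rightarrow> real"
  assumes net: "network W"
  shows "(\<forall>A\<subseteq>S. A \<noteq> {} \<longrightarrow> \<not> A \<subseteq> Fs W hp A) \<Longrightarrow> \<exists>xs. robust_I_path W (box hm hp) xs \<and>
     hd xs = cfg S \<and> last xs = cfg {} \<and> length xs = card S + 1"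
proof (induction "card S" arbitrary: S)
  case 0
  then have "S = {}" by simp
  then show ?case using rpath_single[OF cfg_configs, of W "box hm hp" "{}"] by fastforce
next
  case (Suc n)
  then have "S \<noteq> {}" by auto
  with Suc.prems have "\<not> S \<subseteq> Fs W hp S" by blast
  then obtain i where i1: "i \<in> S" "i \<notin> Fs W hp S" by blast
  then have i: "i \<in> S" "sc W S i + hp i < 0" by (auto simp: Fs_def)
  have "card (S - {i}) = n" using Suc.hyps(2) i(1) by simp
  moreover have "\<forall>A\<subseteq>S - {i}. A \<noteq> {} \<longrightarrow> \<not> A \<subseteq> Fs W hp A" using Suc.prems by blast
  ultimately obtain ys where ys: "robust_I_path W (box hm hp) ys" "hd ys = cfg (S - {i})"
    "last ys = cfg {}" "length ys = card (S - {i}) + 1"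
    using Suc.hyps(1) by blast
  have "robust_I_path W (box hm hp) (cfg S # ys)"
    using rpath_cons[OF _ ys(1)] down_step[where hm=hm and hp=hp, OF net i] ys(2) by simp
  moreover have "ys \<noteq> []" using ys(4) by auto
  ultimately show ?case using ys Suc.hyps(2) \<open>card (S - {i}) = n\<close>
    by (intro exI[of _ "cfg S # ys"]) auto
qed

lemma up_path:
  fixes W :: "'v::finite \<Rightarrow> 'v \<Rightarrow> real"
  assumes net: "network W"
  shows "(\<forall>C. S \<subseteq> C \<and> C \<noteq> UNIV \<longrightarrow> \<not> Gs W hm C \<subseteq> C) \<Longrightarrow> \<exists>xs. robust_I_path W (box hm hp) xs \<and>
     hd xs = cfg S \<and> last xs = cfg UNIV \<and> length xs = card (-S) + 1"
proof (induction "card (-S)" arbitrary: S)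
  case 0
  then have "S = UNIV" by (metis card_0_eq finite Compl_empty_eq double_compl)
  then show ?case using rpath_single[OF cfg_configs, of W "box hm hp" "UNIV"] by fastforce
next
  case (Suc n)
  then have "S \<noteq> UNIV" by auto
  with Suc.prems have "\<not> Gs W hm S \<subseteq> S" by blast
  then obtain i where i: "i \<notin> S" "sc W S i + hm i > 0" by (auto simp: Gs_def not_le)
  have "-(insert i S) = -S - {i}" by auto
  then have "card (-(insert i S)) = n" using Suc.hyps(2) i(1) by simp
  moreover have "\<forall>C. insert i S \<subseteq> C \<and> C \<noteq> UNIV \<longrightarrow> \<not> Gs W hm C \<subseteq> C" using Suc.prems by blast
  ultimately obtain ys where ys: "robust_I_path W (box hm hp) ys" "hd ys = cfg (insert i S)"
    "last ys = cfg UNIV" "length ys = card (-(insert i S)) + 1"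
    using Suc.hyps(1) by blast
  have "robust_I_path W (box hm hp) (cfg S # ys)"
    using rpath_cons[OF _ ys(1)] up_step[where hm=hm and hp=hp, OF net i] ys(2) by simp
  moreover have "ys \<noteq> []" using ys(4) by auto
  ultimately show ?case using ys Suc.hyps(2) \<open>card (-(insert i S)) = n\<close>
    by (intro exI[of _ "cfg S # ys"]) auto
qed

lemma flip_util:
  assumes net: "network W" and x: "x \<in> configs" and y: "y \<in> configs" and sp: "step_player x y i"
  shows "utility W h y i = - utility W h x i"
proof -
  have yeq: "y = x(i := y i)" using sp by (auto simp: step_player_def)
  have "x i = 1 \<or> x i = -1" "y i = 1 \<or> y i = -1" "x i \<noteq> y i"
    using x y sp by (auto simp: configs_def step_player_def)
  then have "y i = - x i" by auto
  have "utility W h y i = y i * ((\<Sum>j\<in>UNIV. W i j * x j) + h i)"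
    by (subst yeq, rule util_upd[OF net])
  then show ?thesis using \<open>y i = - x i\<close> by (simp add: utility_def)
qed

lemma first_step:
  assumes "admissible_path xs" "Suc 0 < length xs"
  shows "\<exists>i. step_player (xs!0) (xs!Suc 0) i" "xs!0 \<in> configs" "xs!Suc 0 \<in> configs" "hd xs = xs!0"
  using assms by (auto simp: admissible_path_def hd_conv_nth intro: nth_mem)

lemma no_exit_I:
  assumes net: "network W" and p: "I_path W h xs" and l: "Suc 0 < length xs"
  shows "\<exists>i. utility W h (hd xs) i < 0"
proof -
  have adm: "admissible_path xs" using p by (simp add: I_path_def)
  obtain i where sp: "step_player (xs!0) (xs!Suc 0) i" using first_step[OF adm l] by blast
  have "utility W h (xs!Suc 0) i > utility W h (xs!0) i"
    using p l sp unfolding I_path_def by blast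
  moreover have "utility W h (xs!Suc 0) i = - utility W h (xs!0) i"
    using flip_util[OF net _ _ sp] first_step[OF adm l] by blast
  ultimately show ?thesis using first_step[OF adm l] by (intro exI[of _ i]) simp
qed

lemma no_exit_BR:
  assumes net: "network W" and p: "BR_path W h xs" and l: "Suc 0 < length xs"
  shows "\<exists>i. utility W h (hd xs) i \<le> 0"
proof -
  have adm: "admissible_path xs" using p by (simp add: BR_path_def)
  obtain i where sp: "step_player (xs!0) (xs!Suc 0) i" using first_step[OF adm l] by blast
  have "utility W h (xs!Suc 0) i \<ge> utility W h (xs!0) i"
    using p l sp unfolding BR_path_def by blast
  moreover have "utility W h (xs!Suc 0) i = - utility W h (xs!0) i"
    using flip_util[OF net _ _ sp] first_step[OF adm l] by blast
  ultimately show ?thesis using first_step[OF adm l] by (intro exI[of _ i]) simp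
qed

lemma len1_last: "xs \<noteq> [] \<Longrightarrow> \<not> Suc 0 < length xs \<Longrightarrow> last xs = hd xs"
  by (cases xs) auto

lemma stable_I:
  assumes net: "network W" and r: "globally_reachable (I_path W h) Y"
    and pos: "\<forall>y\<in>Y. \<forall>i. utility W h y i \<ge> 0"
  shows "globally_stable (I_path W h) Y"
  unfolding globally_stable_def
proof (intro conjI r notI)
  assume "\<exists>xs. I_path W h xs \<and> hd xs \<in> Y \<and> last xs \<notin> Y"
  then obtain xs where xs: "I_path W h xs" "hd xs \<in> Y" "last xs \<notin> Y" by blast
  have "xs \<noteq> []" using xs(1) by (simp add: I_path_def admissible_path_def)
  then have "Suc 0 < length xs" using xs len1_last by metis
  then obtain i where "utility W h (hd xs) i < 0" using no_exit_I[OF net xs(1)] by blast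
  moreover have "0 \<le> utility W h (hd xs) i" using pos xs(2) by blast
  ultimately show False by linarith
qed

lemma stable_BR:
  assumes net: "network W" and r: "globally_reachable (BR_path W h) Y"
    and pos: "\<forall>y\<in>Y. \<forall>i. utility W h y i > 0"
  shows "globally_stable (BR_path W h) Y"
  unfolding globally_stable_def
proof (intro conjI r notI)
  assume "\<exists>xs. BR_path W h xs \<and> hd xs \<in> Y \<and> last xs \<notin> Y"
  then obtain xs where xs: "BR_path W h xs" "hd xs \<in> Y" "last xs \<notin> Y" by blast
  have "xs \<noteq> []" using xs(1) by (simp add: BR_path_def admissible_path_def)
  then have "Suc 0 < length xs" using xs len1_last by metis
  then obtain i where "utility W h (hd xs) i \<le> 0" using no_exit_BR[OF net xs(1)] by blast
  moreover have "0 < utility W h (hd xs) i" using pos xs(2) by blast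
  ultimately show False by linarith
qed

lemma I_BR: "I_path W h xs \<Longrightarrow> BR_path W h xs"
  unfolding I_path_def BR_path_def by (meson less_imp_le)

lemma robust_I: "robust_I_path W H xs \<Longrightarrow> h \<in> H \<Longrightarrow> I_path W h xs"
  by (simp add: robust_I_path_def)

lemma eq_char:
  assumes net: "network W" and x: "x \<in> configs"
  shows "x \<in> equilibria W h \<longleftrightarrow> (\<forall>i. utility W h x i \<ge> 0)"
proof -
  have u: "utility W h (x(i:=a)) i = a * ((\<Sum>j\<in>UNIV. W i j * x j) + h i)" for i a
    by (rule util_upd[OF net])
  have ux: "utility W h x i = x i * ((\<Sum>j\<in>UNIV. W i j * x j) + h i)" for i
    by (simp add: utility_def)
  have xi: "x i = 1 \<or> x i = -1" for i using x by (simp add: configs_def)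
  show ?thesis
  proof
    assume e: "x \<in> equilibria W h"
    show "\<forall>i. utility W h x i \<ge> 0"
    proof
      fix i
      have "- x i \<in> {-1, 1}" using xi[of i] by auto
      moreover have "\<forall>a\<in>{-1, 1}. utility W h (x(i := a)) i \<le> utility W h x i"
        using e unfolding equilibria_def by blast
      ultimately have "utility W h (x(i := - x i)) i \<le> utility W h x i"
        by blast
      then show "utility W h x i \<ge> 0" unfolding u ux by simp
    qed
  next
    assume a: "\<forall>i. utility W h x i \<ge> 0"
    show "x \<in> equilibria W h"
      unfolding equilibria_def
    proof (intro CollectI conjI x allI ballI)
      fix i and b :: real assume b: "b \<in> {-1, 1}"
      have "0 \<le> x i * ((\<Sum>j\<in>UNIV. W i j * x j) + h i)" using a ux by metis
      then show "utility W h (x(i := b)) i \<le> utility W h x i"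
        unfolding u ux using b xi[of i] by auto
    qed
  qed
qed

lemma nonconst:
  assumes hi: "h_indecomposable W h" and "P \<noteq> {}" "P \<noteq> UNIV"
  shows "\<exists>i. utility W h (cfg P) i < 0"
proof -
  have "P \<inter> -P = {} \<and> P \<union> -P = UNIV \<and> P \<noteq> {} \<and> -P \<noteq> {}" using assms by auto
  then have "(\<exists>i\<in>P. wS W P i + h i < wS W (-P) i) \<or> (\<exists>i\<in>-P. wS W (-P) i - h i < wS W P i)"
    using hi unfolding h_indecomposable_def by blast
  then show ?thesis
  proof
    assume "\<exists>i\<in>P. wS W P i + h i < wS W (-P) i"
    then obtain i where "i \<in> P" "wS W P i + h i < wS W (-P) i" by auto
    then show ?thesis by (intro exI[of _ i]) (simp only: util_cfg, simp add: sc_wS cfg_def)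
  next
    assume "\<exists>i\<in>-P. wS W (-P) i - h i < wS W P i"
    then obtain i where "i \<notin> P" "wS W (-P) i - h i < wS W P i" by auto
    then show ?thesis by (intro exI[of _ i]) (simp only: util_cfg, simp add: sc_wS cfg_def)
  qed
qed

lemma util_UNIV: "utility W h (cfg UNIV) i = outdeg W i + h i"
  by (simp only: util_cfg sc_UNIV) (simp add: cfg_def)
lemma util_empty: "utility W h (cfg {}) i = outdeg W i - h i"
  by (simp only: util_cfg sc_empty) (simp add: cfg_def)

lemma eq_sub:
  assumes net: "network W" and hi: "h_indecomposable W h" and x: "x \<in> equilibria W h"
  shows "\<exists>S. x = cfg S \<and> (S = {} \<or> S = UNIV)"
proof -
  have xc: "x \<in> configs" using x by (simp add: equilibria_def)
  define S where "S = {j. x j = 1}"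
  have xS: "x = cfg S" using configs_cfg[OF xc] by (simp add: S_def)
  have "S = {} \<or> S = UNIV"
  proof (rule ccontr)
    assume "\<not> (S = {} \<or> S = UNIV)"
    then obtain i where "utility W h (cfg S) i < 0" using nonconst[OF hi] by blast
    moreover have "\<forall>i. utility W h x i \<ge> 0" using eq_char[OF net xc] x by blast
    ultimately show False using xS by (metis not_le)
  qed
  then show ?thesis using xS by blast
qed

theorem theorem4:
  fixes W :: "'v::finite \<Rightarrow> 'v \<Rightarrow> real" and hm hp :: "'v \<Rightarrow> real"
  assumes net: "network W"
    and hle: "\<forall>i. hm i \<le> hp i"
    and indec: "robustly_indecomposable W (box hm hp)"
  shows
    "((\<forall>x\<in>configs. \<exists>xs. robust_I_path W (box hm hp) xs \<and> hd xs = x \<and>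
          length xs - 1 \<le> card (UNIV :: 'v set) \<and> last xs \<in> {(\<lambda>_. 1), (\<lambda>_. -1)})
     \<and> (\<forall>h\<in>box hm hp. globally_reachable (I_path W h) {(\<lambda>_. 1), (\<lambda>_. -1)}))
     \<and> ((\<forall>i. outdeg W i \<ge> hp i) \<and> (\<forall>i. outdeg W i \<ge> - hm i) \<longrightarrow>
       (\<forall>h\<in>box hm hp. equilibria W h = {(\<lambda>_. 1), (\<lambda>_. -1)} \<and>
          globally_stable (I_path W h) {(\<lambda>_. 1), (\<lambda>_. -1)}))
     \<and> (\<forall>a\<in>{1, -1::real}.
       (\<forall>i. outdeg W i \<ge> - a * hneg a hm hp i) \<and> \<not> (\<forall>i. outdeg W i \<ge> a * hneg a hm hp i) \<longrightarrow>
       (\<forall>x\<in>configs. \<exists>xs. robust_I_path W (box hm hp) xs \<and> hd xs = x \<and> last xs = (\<lambda>_. a))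
       \<and> (\<forall>h\<in>box hm hp. equilibria W h = {(\<lambda>_. a)} \<and>
             globally_stable (BR_path W h) {(\<lambda>_. a)}))"
proof -
  let ?H = "box hm hp"
  let ?Y = "{(\<lambda>_::'v. 1::real), (\<lambda>_. -1)}"
  have Y: "?Y = {cfg UNIV, cfg {}}" by (simp add: cfg_UNIV cfg_empty)
  have hind: "h_indecomposable W h" if "h \<in> ?H" for h
    using indec that by (simp add: robustly_indecomposable_def)
  have stuck: "P = {} \<or> P = UNIV" if "P \<subseteq> Fs W hp P" "Gs W hm P \<subseteq> P" for P
    using indec_stuck[OF hle indec that] .
  have cardle: "card (A::'v set) \<le> card (UNIV :: 'v set)" for A
    by (rule card_mono) auto
  have P1: "\<forall>x\<in>configs. \<exists>xs. robust_I_path W ?H xs \<and> hd xs = x \<and>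
          length xs - 1 \<le> card (UNIV :: 'v set) \<and> last xs \<in> ?Y"
  proof
    fix x :: "'v \<Rightarrow> real" assume xc: "x \<in> configs"
    define S where "S = {j. x j = 1}"
    have xS: "x = cfg S" using configs_cfg[OF xc] by (simp add: S_def)
    show "\<exists>xs. robust_I_path W ?H xs \<and> hd xs = x \<and>
          length xs - 1 \<le> card (UNIV :: 'v set) \<and> last xs \<in> ?Y"
    proof (cases "\<exists>A\<subseteq>S. A \<noteq> {} \<and> A \<subseteq> Fs W hp A")
      case True
      then obtain A where A: "A \<subseteq> S" "A \<noteq> {}" "A \<subseteq> Fs W hp A" by blast
      have "\<forall>C. S \<subseteq> C \<and> C \<noteq> UNIV \<longrightarrow> \<not> Gs W hm C \<subseteq> C"
      proof (intro allI impI notI)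
        fix C assume C: "S \<subseteq> C \<and> C \<noteq> UNIV" "Gs W hm C \<subseteq> C"
        obtain P where P: "A \<subseteq> P" "P \<subseteq> C" "P \<subseteq> Fs W hp P" "Gs W hm P \<subseteq> P"
          using stuck_exists[OF net hle A(3) C(2)] A(1) C(1) by (meson order_trans)
        show False using stuck[OF P(3,4)] P(1,2) A(2) C(1) by blast
      qed
      from up_path[OF net this, of hp] obtain xs where xs: "robust_I_path W ?H xs"
        "hd xs = cfg S" "last xs = cfg UNIV" "length xs = card (-S) + 1" by blast
      show ?thesis using xs xS Y cardle[of "-S"] by (intro exI[of _ xs]) auto
    next
      case False
      then have "\<forall>A\<subseteq>S. A \<noteq> {} \<longrightarrow> \<not> A \<subseteq> Fs W hp A" by blast
      from down_path[OF net this, of hm] obtain xs where xs: "robust_I_path W ?H xs"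
        "hd xs = cfg S" "last xs = cfg {}" "length xs = card S + 1" by blast
      show ?thesis using xs xS Y cardle[of "S"] by (intro exI[of _ xs]) auto
    qed
  qed
  have R1: "\<forall>h\<in>?H. globally_reachable (I_path W h) ?Y"
  proof (intro ballI)
    fix h assume h: "h \<in> ?H"
    show "globally_reachable (I_path W h) ?Y" unfolding globally_reachable_def
    proof
      fix x :: "'v \<Rightarrow> real" assume "x \<in> configs"
      then obtain xs where "robust_I_path W ?H xs" "hd xs = x" "last xs \<in> ?Y" using P1 by blast
      then show "\<exists>xs. I_path W h xs \<and> hd xs = x \<and> last xs \<in> ?Y" using robust_I[OF _ h] by blast
    qed
  qed
  have P2: "(\<forall>i. outdeg W i \<ge> hp i) \<and> (\<forall>i. outdeg W i \<ge> - hm i) \<longrightarrow>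
       (\<forall>h\<in>?H. equilibria W h = ?Y \<and> globally_stable (I_path W h) ?Y)"
  proof (intro impI ballI)
    assume a: "(\<forall>i. outdeg W i \<ge> hp i) \<and> (\<forall>i. outdeg W i \<ge> - hm i)"
    fix h assume h: "h \<in> ?H"
    have hb: "hm i \<le> h i" "h i \<le> hp i" for i using h by (auto simp: box_def)
    have pu: "utility W h (cfg UNIV) i \<ge> 0" for i
    proof -
      have "- hm i \<le> outdeg W i" "hm i \<le> h i" using a hb[of i] by auto
      then show ?thesis unfolding util_UNIV by linarith
    qed
    have pe: "utility W h (cfg {}) i \<ge> 0" for i
    proof -
      have "h i \<le> outdeg W i" using a hb[of i] by (meson order_trans)
      then show ?thesis unfolding util_empty by simp
    qed
    have pos: "\<forall>y\<in>?Y. \<forall>i. utility W h y i \<ge> 0"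
      unfolding Y using pu pe by blast
    have "equilibria W h = ?Y"
    proof
      show "equilibria W h \<subseteq> ?Y"
      proof
        fix x assume "x \<in> equilibria W h"
        then obtain S where "x = cfg S" "S = {} \<or> S = UNIV" using eq_sub[OF net hind[OF h]] by blast
        then show "x \<in> ?Y" unfolding Y by blast
      qed
      have "cfg UNIV \<in> equilibria W h" using eq_char[OF net cfg_configs] pu by blast
      moreover have "cfg {} \<in> equilibria W h" using eq_char[OF net cfg_configs] pe by blast
      ultimately show "?Y \<subseteq> equilibria W h" unfolding Y by blast
    qed
    moreover have "globally_stable (I_path W h) ?Y"
      using stable_I[OF net _ pos] R1 h by blast
    ultimately show "equilibria W h = ?Y \<and> globally_stable (I_path W h) ?Y" by blast
  qed
  have P3: "\<forall>a\<in>{1, -1::real}.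
       (\<forall>i. outdeg W i \<ge> - a * hneg a hm hp i) \<and> \<not> (\<forall>i. outdeg W i \<ge> a * hneg a hm hp i) \<longrightarrow>
       (\<forall>x\<in>configs. \<exists>xs. robust_I_path W ?H xs \<and> hd xs = x \<and> last xs = (\<lambda>_. a))
       \<and> (\<forall>h\<in>?H. equilibria W h = {(\<lambda>_. a)} \<and>
             globally_stable (BR_path W h) {(\<lambda>_. a)})"
  proof (intro ballI impI)
    fix a :: real assume "a \<in> {1, -1}" and as: "(\<forall>i. outdeg W i \<ge> - a * hneg a hm hp i) \<and> \<not> (\<forall>i. outdeg W i \<ge> a * hneg a hm hp i)"
    then consider "a = 1" | "a = -1" by blast
    then show "(\<forall>x\<in>configs. \<exists>xs. robust_I_path W ?H xs \<and> hd xs = x \<and> last xs = (\<lambda>_. a))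
       \<and> (\<forall>h\<in>?H. equilibria W h = {(\<lambda>_. a)} \<and>
             globally_stable (BR_path W h) {(\<lambda>_. a)})"
    proof cases
      case 1
      have as1: "\<forall>i. - hm i \<le> outdeg W i" "\<not> (\<forall>i. hm i \<le> outdeg W i)"
        using as 1 by (simp_all add: hneg_def)
      from as1(2) obtain k where "\<not> hm k \<le> outdeg W k" by blast
      then have k: "outdeg W k < hm k" by linarith
      have kG: "k \<in> Gs W hm {}" using k by (simp add: Gs_def sc_empty)
      have strict: "outdeg W i + hm i > 0" for i
      proof (rule ccontr)
        assume "\<not> outdeg W i + hm i > 0"
        have "sc W (-{i}) i = sc W UNIV i" using sc_ins(2)[OF net, of UNIV i]
          by (simp add: Compl_eq_Diff_UNIV)
        then have "i \<notin> Gs W hm (-{i})" using \<open>\<not> outdeg W i + hm i > 0\<close>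
          by (simp add: Gs_def sc_UNIV)
        then have G: "Gs W hm (-{i}) \<subseteq> -{i}" by auto
        have E: "{} \<subseteq> Fs W hp {}" by simp
        obtain P where P: "P \<subseteq> -{i}" "P \<subseteq> Fs W hp P" "Gs W hm P \<subseteq> P"
          using stuck_exists[OF net hle E G empty_subsetI] by blast
        then have "P = {}" using stuck[OF P(2,3)] by auto
        then show False using P(3) kG by auto
      qed
      have path: "\<forall>x\<in>configs. \<exists>xs. robust_I_path W ?H xs \<and> hd xs = x \<and> last xs = cfg UNIV"
      proof
        fix x :: "'v \<Rightarrow> real" assume xc: "x \<in> configs"
        define S where "S = {j. x j = 1}"
        have xS: "x = cfg S" using configs_cfg[OF xc] by (simp add: S_def)
        have "\<forall>C. S \<subseteq> C \<and> C \<noteq> UNIV \<longrightarrow> \<not> Gs W hm C \<subseteq> C"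
        proof (intro allI impI notI)
          fix C assume C: "S \<subseteq> C \<and> C \<noteq> UNIV" "Gs W hm C \<subseteq> C"
          obtain P where P: "P \<subseteq> C" "P \<subseteq> Fs W hp P" "Gs W hm P \<subseteq> P"
            using stuck_exists[OF net hle empty_subsetI C(2) empty_subsetI] by blast
          then have "P = {}" using stuck[OF P(2,3)] C(1) by auto
          then show False using P(3) kG by auto
        qed
        from up_path[OF net this, of hp] show "\<exists>xs. robust_I_path W ?H xs \<and> hd xs = x \<and> last xs = cfg UNIV"
          using xS by blast
      qed
      show ?thesis
      proof (intro conjI ballI)
        show "\<exists>xs. robust_I_path W ?H xs \<and> hd xs = x \<and> last xs = (\<lambda>_. a)" if "x \<in> configs" for x
          using path that 1 by (simp add: cfg_UNIV)
        fix h assume h: "h \<in> ?H"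
        have hb: "hm i \<le> h i" "h i \<le> hp i" for i using h by (auto simp: box_def)
        have pu: "utility W h (cfg UNIV) i > 0" for i
        proof -
          have "hm i \<le> h i" using hb[of i] by simp
          then show ?thesis using strict[of i] unfolding util_UNIV by linarith
        qed
        have pos: "\<forall>y\<in>{cfg UNIV}. \<forall>i. utility W h y i > 0" using pu by blast
        have "equilibria W h = {cfg UNIV}"
        proof
          show "equilibria W h \<subseteq> {cfg UNIV}"
          proof
            fix x assume x: "x \<in> equilibria W h"
            then obtain S where S: "x = cfg S" "S = {} \<or> S = UNIV" using eq_sub[OF net hind[OF h]] by blast
            have "S \<noteq> {}"
            proof
              assume "S = {}"
              then have "utility W h x k \<ge> 0" using eq_char[OF net] x S(1) cfg_configs by blast
              moreover have "utility W h (cfg {}) k < 0" using k hb[of k]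
                unfolding util_empty by simp
              then have "utility W h x k < 0" using \<open>S = {}\<close> S(1) by simp
              ultimately show False by simp
            qed
            then show "x \<in> {cfg UNIV}" using S by auto
          qed
          have "cfg UNIV \<in> equilibria W h" using eq_char[OF net cfg_configs] pu by (meson less_imp_le)
          then show "{cfg UNIV} \<subseteq> equilibria W h" by blast
        qed
        moreover have "globally_stable (BR_path W h) {cfg UNIV}"
        proof (rule stable_BR[OF net _ pos])
          show "globally_reachable (BR_path W h) {cfg UNIV}" unfolding globally_reachable_def
          proof
            fix x :: "'v \<Rightarrow> real" assume "x \<in> configs"
            then obtain xs where "robust_I_path W ?H xs" "hd xs = x" "last xs = cfg UNIV" using path by blast
            then show "\<exists>xs. BR_path W h xs \<and> hd xs = x \<and> last xs \<in> {cfg UNIV}"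
              using robust_I[OF _ h] I_BR by blast
          qed
        qed
        ultimately show "equilibria W h = {(\<lambda>_. a)}" "globally_stable (BR_path W h) {(\<lambda>_. a)}"
          using 1 by (simp_all add: cfg_UNIV)
      qed
    next
      case 2
      have as1: "\<forall>i. hp i \<le> outdeg W i" "\<not> (\<forall>i. - hp i \<le> outdeg W i)"
        using as 2 by (simp_all add: hneg_def)
      from as1(2) obtain k where "\<not> - hp k \<le> outdeg W k" by blast
      then have k: "outdeg W k + hp k < 0" by linarith
      have kF: "k \<notin> Fs W hp UNIV" using k by (simp add: Fs_def sc_UNIV)
      have strict: "outdeg W i - hp i > 0" for i
      proof (rule ccontr)
        assume "\<not> outdeg W i - hp i > 0"
        have "sc W {i} i = sc W {} i" using sc_ins(1)[OF net, of i "{}"] by simp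
        then have "i \<in> Fs W hp {i}" using \<open>\<not> outdeg W i - hp i > 0\<close>
          by (simp add: Fs_def sc_empty)
        then have "{i} \<subseteq> Fs W hp {i}" by auto
        then obtain P where P: "{i} \<subseteq> P" "P \<subseteq> Fs W hp P" "Gs W hm P \<subseteq> P"
          using stuck_exists[OF net hle \<open>{i} \<subseteq> Fs W hp {i}\<close> subset_UNIV subset_UNIV] by blast
        then have "P = UNIV" using stuck[OF P(2,3)] by auto
        then show False using P(2) kF by auto
      qed
      have path: "\<forall>x\<in>configs. \<exists>xs. robust_I_path W ?H xs \<and> hd xs = x \<and> last xs = cfg {}"
      proof
        fix x :: "'v \<Rightarrow> real" assume xc: "x \<in> configs"
        define S where "S = {j. x j = 1}"
        have xS: "x = cfg S" using configs_cfg[OF xc] by (simp add: S_def)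
        have "\<forall>A\<subseteq>S. A \<noteq> {} \<longrightarrow> \<not> A \<subseteq> Fs W hp A"
        proof (intro allI impI notI)
          fix A assume A: "A \<subseteq> S" "A \<noteq> {}" "A \<subseteq> Fs W hp A"
          obtain P where P: "A \<subseteq> P" "P \<subseteq> Fs W hp P" "Gs W hm P \<subseteq> P"
            using stuck_exists[OF net hle A(3) subset_UNIV subset_UNIV] by blast
          then have "P = UNIV" using stuck[OF P(2,3)] A(2) by auto
          then show False using P(2) kF by auto
        qed
        from down_path[OF net this, of hm] show "\<exists>xs. robust_I_path W ?H xs \<and> hd xs = x \<and> last xs = cfg {}"
          using xS by blast
      qed
      show ?thesis
      proof (intro conjI ballI)
        show "\<exists>xs. robust_I_path W ?H xs \<and> hd xs = x \<and> last xs = (\<lambda>_. a)" if "x \<in> configs" for x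
          using path that 2 by (simp add: cfg_empty)
        fix h assume h: "h \<in> ?H"
        have hb: "hm i \<le> h i" "h i \<le> hp i" for i using h by (auto simp: box_def)
        have pu: "utility W h (cfg {}) i > 0" for i
        proof -
          have "h i \<le> hp i" using hb[of i] by simp
          then show ?thesis using strict[of i] unfolding util_empty by linarith
        qed
        have pos: "\<forall>y\<in>{cfg {}}. \<forall>i. utility W h y i > 0" using pu by blast
        have "equilibria W h = {cfg {}}"
        proof
          show "equilibria W h \<subseteq> {cfg {}}"
          proof
            fix x assume x: "x \<in> equilibria W h"
            then obtain S where S: "x = cfg S" "S = {} \<or> S = UNIV" using eq_sub[OF net hind[OF h]] by blast
            have "S \<noteq> UNIV"
            proof
              assume "S = UNIV"
              then have "utility W h x k \<ge> 0" using eq_char[OF net] x S(1) cfg_configs by blast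
              moreover have "utility W h (cfg UNIV) k < 0" using k hb[of k]
                unfolding util_UNIV by simp
              then have "utility W h x k < 0" using \<open>S = UNIV\<close> S(1) by simp
              ultimately show False by simp
            qed
            then show "x \<in> {cfg {}}" using S by auto
          qed
          have "cfg {} \<in> equilibria W h" using eq_char[OF net cfg_configs] pu by (meson less_imp_le)
          then show "{cfg {}} \<subseteq> equilibria W h" by blast
        qed
        moreover have "globally_stable (BR_path W h) {cfg {}}"
        proof (rule stable_BR[OF net _ pos])
          show "globally_reachable (BR_path W h) {cfg {}}" unfolding globally_reachable_def
          proof
            fix x :: "'v \<Rightarrow> real" assume "x \<in> configs"
            then obtain xs where "robust_I_path W ?H xs" "hd xs = x" "last xs = cfg {}" using path by blast
            then show "\<exists>xs. BR_path W h xs \<and> hd xs = x \<and> last xs \<in> {cfg {}}"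
              using robust_I[OF _ h] I_BR by blast
          qed
        qed
        ultimately show "equilibria W h = {(\<lambda>_. a)}" "globally_stable (BR_path W h) {(\<lambda>_. a)}"
          using 2 by (simp_all add: cfg_empty)
      qed
    qed
  qed
  show ?thesis
    apply (intro conjI)
       apply (rule P1)
      apply (rule R1)
     apply (rule P2)
    apply (rule P3)
    done
qed

end
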